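(* Let $x_0,x_1,\dots,x_N\in\mathbb{R}$ be the features of a time series and let $\|\cdot\|$ be a norm. Let $\mathcal{D}$ be a probability distribution with support $[0,1)$ and $e=\mathbb{E}[\mathcal{D}]$ its mean. Let $\lambda_1,\dots,\lambda_N$ be drawn independently from $\mathcal{D}$, and let $\lambda_0$ be a dummy value. Define recursively $x_{0,\lambda_0}=x_0$ and $x_{i,\lambda_i}=(1-\lambda_i)x_i+\lambda_i x_{i-1,\lambda_{i-1}}$ for $i\ge 1$. For $k\in[0:N]$ let $g(\lambda_k)=(1-\lambda_k)(1-\delta_{0k})+(1-\operatorname{sign}(k))$, where $\delta_{ab}=1$ if $a=b$ and $0$ otherwise, and $\operatorname{sign}(0)=0$, $\operatorname{sign}(t)=1$ for $t>0$, $\operatorname{sign}(t)=-1$ for $t<0$. Let $m=\max_{i\in[0:N]}\|x_i\|$ and $m'=\max_{i\in[1:N]}\|x_i-x_{i-1}\|$. Then for every $n\in[0:N]$: (1) $x_{n,\lambda_n}=\sum_{k=0}^{n}\Big(\prod_{i=k+1}^{n}\lambda_i\Big)g(\lambda_k)\,x_k$ (an empty product equals $1$); (2) $\big\|\mathbb{E}_{\lambda_1,\dots,\lambda_n}[x_{n,\lambda_n}-x_n]\big\|\le\min\{3em,\ \tfrac{e}{1-e}m',\ Nem'\}$, and, for every fixed value of $\lambda_n\in[0,1)$, $\mathbb{E}_{\lambda_1,\dots,\lambda_{n-1}}\big[\|x_{n,\lambda_n}-x_n\|\big]\le 2\lambda_n m$.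
   Context: This is the Recursive Interpolation Method (RIM) for time series augmentation: the augmented features $x_{i,\lambda_i}$ are obtained by recursively taking convex combinations of the current original feature with the previous augmented feature. *)

theory Defs
  imports "HOL-Probability.Probability"
begin

definition is_norm :: "(real \<Rightarrow> real) \<Rightarrow> bool" where
  "is_norm nrm \<longleftrightarrow>
     (\<forall>x. 0 \<le> nrm x) \<and> (\<forall>x. nrm x = 0 \<longleftrightarrow> x = 0) \<and>
     (\<forall>c x. nrm (c * x) = \<bar>c\<bar> * nrm x) \<and>
     (\<forall>x y. nrm (x + y) \<le> nrm x + nrm y)"

text \<open>Recursive Interpolation Method: rim x l i is the augmented feature x_{i,lambda_i}.
  The value l 0 (the dummy lambda_0) is never used.\<close>
fun rim :: "(nat \<Rightarrow> real) \<Rightarrow> (nat \<Rightarrow> real) \<Rightarrow> nat \<Rightarrow> real" where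
  "rim x l 0 = x 0"
| "rim x l (Suc i) = (1 - l (Suc i)) * x (Suc i) + l (Suc i) * rim x l i"

definition kdelta :: "nat \<Rightarrow> nat \<Rightarrow> real" where
  "kdelta a b = (if a = b then 1 else 0)"

definition gfun :: "(nat \<Rightarrow> real) \<Rightarrow> nat \<Rightarrow> real" where
  "gfun l k = (1 - l k) * (1 - kdelta 0 k) + (1 - sgn (real k))"

definition mmax :: "(real \<Rightarrow> real) \<Rightarrow> (nat \<Rightarrow> real) \<Rightarrow> nat \<Rightarrow> real" where
  "mmax nrm x N = Max ((\<lambda>i. nrm (x i)) ` {0..N})"

text \<open>m' = max over [1:N] of norms of consecutive differences (0 if N = 0, i.e. empty max).\<close>
definition mmax' :: "(real \<Rightarrow> real) \<Rightarrow> (nat \<Rightarrow> real) \<Rightarrow> nat \<Rightarrow> real" where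
  "mmax' nrm x N = Max (insert 0 ((\<lambda>i. nrm (x i - x (i - 1))) ` {1..N}))"

end

theory Submission
  imports Defs
begin

lemma rim_upd: "n < j \<Longrightarrow> rim x (l(j:=y)) n = rim x l n"
  by (induction n) auto

lemma norm_props:
  assumes "is_norm nrm"
  shows "nrm (c * y) = \<bar>c\<bar> * nrm y" "nrm (a + b) \<le> nrm a + nrm b" "0 \<le> nrm a"
    "nrm (a - b) \<le> nrm a + nrm b" "nrm (-a) = nrm a" "nrm (a - b) = nrm (b - a)"
proof -
  show 1: "nrm (c * y) = \<bar>c\<bar> * nrm y" using assms unfolding is_norm_def by blast
  show 2: "nrm (a + b) \<le> nrm a + nrm b" using assms unfolding is_norm_def by blast
  show "0 \<le> nrm a" using assms unfolding is_norm_def by blast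
  have h: "\<forall>c x. nrm (c * x) = \<bar>c\<bar> * nrm x" using assms unfolding is_norm_def by blast
  have n: "nrm (-z) = nrm z" for z using h[rule_format, of "-1" z] by simp
  then show "nrm (-a) = nrm a" .
  have h2: "\<forall>x y. nrm (x + y) \<le> nrm x + nrm y" using assms unfolding is_norm_def by blast
  show "nrm (a - b) \<le> nrm a + nrm b" using h2[rule_format, of a "-b"] n[of b] by simp
  show "nrm (a - b) = nrm (b - a)" using n[of "a - b"] by simp
qed

lemma rim_bound:
  assumes "is_norm nrm" "\<forall>i\<le>n. nrm (x i) \<le> M" "\<forall>i\<in>{1..n}. l i \<in> {0..1}"
  shows "nrm (rim x l n) \<le> M"
  using assms(2,3)
proof (induction n)
  case 0
  then show ?case by simp
next
  case (Suc n)
  let ?a = "l (Suc n)"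
  have a: "0 \<le> ?a" "?a \<le> 1" using Suc.prems(2) by auto
  have IH: "nrm (rim x l n) \<le> M" using Suc by auto
  have X: "nrm (x (Suc n)) \<le> M" using Suc.prems(1) by auto
  have "nrm (rim x l (Suc n)) \<le> nrm ((1 - ?a) * x (Suc n)) + nrm (?a * rim x l n)"
    using norm_props(2)[OF assms(1)] by simp
  also have "\<dots> = (1 - ?a) * nrm (x (Suc n)) + ?a * nrm (rim x l n)"
    using norm_props(1)[OF assms(1)] a by simp
  also have "\<dots> \<le> (1 - ?a) * M + ?a * M"
    using IH X a by (intro add_mono mult_left_mono) auto
  finally show ?case by (simp add: algebra_simps)
qed

lemma is_norm_abs: "is_norm abs"
  unfolding is_norm_def by (auto simp: abs_mult)

context
  fixes D :: "real measure"
  assumes D: "prob_space D" "sets D = sets borel" "AE t in D. t \<in> {0..<1}"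
begin

lemma PiD_prob: "prob_space (PiM I (\<lambda>_. D))"
  by (intro prob_space_PiM D)

lemma PiD_psf: "product_sigma_finite (\<lambda>_. D)"
  unfolding product_sigma_finite_def
  using D(1) by (simp add: prob_space_imp_sigma_finite)

lemma comp_meas: "i \<in> I \<Longrightarrow> (\<lambda>l. l i) \<in> borel_measurable (PiM I (\<lambda>_. D))"
  using measurable_component_singleton[of i I "\<lambda>_. D"]
  by (simp add: measurable_cong_sets[OF refl D(2)])

lemma rim_meas: "{1..n} \<subseteq> I \<Longrightarrow> (\<lambda>l. rim x l n) \<in> borel_measurable (PiM I (\<lambda>_. D))"
proof (induction n)
  case 0
  then show ?case by simp
next
  case (Suc n)
  have c: "(\<lambda>l. l (Suc n)) \<in> borel_measurable (PiM I (\<lambda>_. D))"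
    using Suc.prems by (intro comp_meas) auto
  have "{1..n} \<subseteq> I" using Suc.prems by auto
  then have "(\<lambda>l. rim x l n) \<in> borel_measurable (PiM I (\<lambda>_. D))"
    using Suc.IH by blast
  then show ?case using c by simp
qed

lemma AE_box: "finite I \<Longrightarrow> AE l in PiM I (\<lambda>_. D). \<forall>i\<in>I. l i \<in> {0..<1}"
  by (intro eventually_ball_finite ballI AE_PiM_component D(1) D(3)) auto

lemma rim_integrable:
  assumes "finite I" "{1..n} \<subseteq> I"
  shows "integrable (PiM I (\<lambda>_. D)) (\<lambda>l. rim x l n)"
proof -
  interpret P: prob_space "PiM I (\<lambda>_. D)" by (rule PiD_prob)
  define M where "M = Max ((\<lambda>i. \<bar>x i\<bar>) ` {..n})"
  have M: "\<forall>i\<le>n. \<bar>x i\<bar> \<le> M" unfolding M_def by (auto intro: Max_ge)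
  show ?thesis
  proof (rule P.integrable_const_bound[where B=M])
    show "AE l in PiM I (\<lambda>_. D). norm (rim x l n) \<le> M"
      using AE_box[OF assms(1)]
    proof eventually_elim
      case (elim l)
      have "\<forall>i\<in>{1..n}. l i \<in> {0..1}"
      proof
        fix i assume "i \<in> {1..n}"
        then have "i \<in> I" using assms(2) by blast
        then show "l i \<in> {0..1}" using elim by fastforce
      qed
      then show ?case using rim_bound[OF is_norm_abs M] by simp
    qed
    show "(\<lambda>l. rim x l n) \<in> borel_measurable (PiM I (\<lambda>_. D))"
      by (rule rim_meas[OF assms(2)])
  qed
qed

lemma id_integrable: "integrable D (\<lambda>t. t)"
proof -
  interpret prob_space D by (rule D(1))
  show ?thesis
  proof (rule integrable_const_bound[where B=1])
    show "AE t in D. norm t \<le> 1" using D(3) by eventually_elim auto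
    show "(\<lambda>t. t) \<in> borel_measurable D" by (rule measurable_ident_sets[OF D(2)])
  qed
qed

lemma rim_step:
  "integral\<^sup>L (PiM {1..Suc n} (\<lambda>_. D)) (\<lambda>l. rim x l (Suc n))
   = (1 - integral\<^sup>L D (\<lambda>t. t)) * x (Suc n)
     + integral\<^sup>L D (\<lambda>t. t) * integral\<^sup>L (PiM {1..n} (\<lambda>_. D)) (\<lambda>l. rim x l n)"
proof -
  interpret PS: product_sigma_finite "\<lambda>_. D" by (rule PiD_psf)
  interpret Dp: prob_space D by (rule D(1))
  let ?e = "integral\<^sup>L D (\<lambda>t. t)"
  have ins: "{1..Suc n} = insert (Suc n) {1..n}" by auto
  have "integral\<^sup>L (PiM {1..Suc n} (\<lambda>_. D)) (\<lambda>l. rim x l (Suc n))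
     = (\<integral>l. (\<integral>y. rim x (l(Suc n := y)) (Suc n) \<partial>D) \<partial>PiM {1..n} (\<lambda>_. D))"
  proof -
    have int1: "integrable (PiM (insert (Suc n) {1..n}) (\<lambda>_. D)) (\<lambda>l. rim x l (Suc n))"
      by (rule rim_integrable) auto
    show ?thesis unfolding ins
      by (rule PS.product_integral_insert[OF _ _ int1]) auto
  qed
  also have "\<dots> = (\<integral>l. (1 - ?e) * x (Suc n) + ?e * rim x l n \<partial>PiM {1..n} (\<lambda>_. D))"
  proof (rule Bochner_Integration.integral_cong[OF refl])
    fix l
    have "(\<integral>y. rim x (l(Suc n := y)) (Suc n) \<partial>D)
        = (\<integral>y. x (Suc n) + y * (rim x l n - x (Suc n)) \<partial>D)"
      by (rule Bochner_Integration.integral_cong) (simp_all add: rim_upd algebra_simps)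
    also have "\<dots> = x (Suc n) + ?e * (rim x l n - x (Suc n))"
      using id_integrable by (simp add: Dp.prob_space)
    finally show "(\<integral>y. rim x (l(Suc n := y)) (Suc n) \<partial>D) = (1 - ?e) * x (Suc n) + ?e * rim x l n"
      by (simp add: algebra_simps)
  qed
  also have "\<dots> = (1 - ?e) * x (Suc n) + ?e * integral\<^sup>L (PiM {1..n} (\<lambda>_. D)) (\<lambda>l. rim x l n)"
  proof -
    interpret P: prob_space "PiM {1..n} (\<lambda>_. D)" by (rule PiD_prob)
    have ii: "integrable (PiM {1..n} (\<lambda>_. D)) (\<lambda>l. rim x l n)" by (rule rim_integrable) auto
    have m1: "measure (PiM {1..n} (\<lambda>_. D)) (space (PiM {1..n} (\<lambda>_. D))) = 1"
      by (rule prob_space.prob_space[OF PiD_prob])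
    have "(\<integral>l. (1 - ?e) * x (Suc n) + ?e * rim x l n \<partial>PiM {1..n} (\<lambda>_. D))
       = (\<integral>l. (1 - ?e) * x (Suc n) \<partial>PiM {1..n} (\<lambda>_. D)) + (\<integral>l. ?e * rim x l n \<partial>PiM {1..n} (\<lambda>_. D))"
      by (rule Bochner_Integration.integral_add) (use ii P.integrable_const[of "1 - ?e"] P.integrable_const[of "x (Suc n)"] in auto)
    also have "(\<integral>l. (1 - ?e) * x (Suc n) \<partial>PiM {1..n} (\<lambda>_. D)) = (1 - ?e) * x (Suc n)"
      by (simp only: lebesgue_integral_const m1) simp
    finally show ?thesis using ii by simp
  qed
  finally show ?thesis .
qed

end


lemma rim_formula: "rim x l n = (\<Sum>k = 0..n. (\<Prod>i = k+1..n. l i) * gfun l k * x k)"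
proof (induction n)
  case 0
  then show ?case by (simp add: gfun_def kdelta_def)
next
  case (Suc n)
  have g: "gfun l (Suc n) = 1 - l (Suc n)" by (simp add: gfun_def kdelta_def)
  have p: "(\<Prod>i = k+1..Suc n. l i) = (\<Prod>i = k+1..n. l i) * l (Suc n)" if "k \<in> {0..n}" for k
    using that by (simp add: prod.cl_ivl_Suc)
  have "(\<Sum>k = 0..Suc n. (\<Prod>i = k+1..Suc n. l i) * gfun l k * x k)
      = (\<Sum>k = 0..n. (\<Prod>i = k+1..Suc n. l i) * gfun l k * x k) + (1 - l (Suc n)) * x (Suc n)"
    by (simp add: g)
  also have "(\<Sum>k = 0..n. (\<Prod>i = k+1..Suc n. l i) * gfun l k * x k)
      = l (Suc n) * (\<Sum>k = 0..n. (\<Prod>i = k+1..n. l i) * gfun l k * x k)"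
    unfolding sum_distrib_left by (rule sum.cong[OF refl]) (simp add: p)
  finally show ?case using Suc.IH by simp
qed

theorem theorem1:
  fixes x :: "nat \<Rightarrow> real" and N :: nat and nrm :: "real \<Rightarrow> real"
    and D :: "real measure"
  assumes "is_norm nrm"
    and "prob_space D"
    and "sets D = sets borel"
    and "AE t in D. t \<in> {0..<1}"
  defines "e \<equiv> integral\<^sup>L D (\<lambda>t. t)"
    and "m \<equiv> mmax nrm x N"
    and "m' \<equiv> mmax' nrm x N"
  shows "\<forall>n \<in> {0..N}.
     (\<forall>l :: nat \<Rightarrow> real. (\<forall>i\<in>{1..n}. l i \<in> {0..<1}) \<longrightarrow>
        rim x l n = (\<Sum>k = 0..n. (\<Prod>i = k+1..n. l i) * gfun l k * x k))
   \<and> nrm (integral\<^sup>L (PiM {1..n} (\<lambda>_. D)) (\<lambda>l. rim x l n - x n))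
       \<le> min (3 * e * m) (min (e / (1 - e) * m') (real N * e * m'))
   \<and> (\<forall>t \<in> {0..<1}.
        integral\<^sup>L (PiM {1..<n} (\<lambda>_. D)) (\<lambda>l. nrm (rim x (l(n := t)) n - x n))
          \<le> 2 * t * m)"
proof -
  note nrmp = norm_props[OF assms(1)]
  note DD = assms(2,3,4)
  interpret Dp: prob_space D by (rule assms(2))
  have e0: "0 \<le> e" unfolding e_def
    by (rule integral_nonneg_AE) (use assms(4) in eventually_elim, auto)
  have e1: "e < 1"
  proof (rule ccontr)
    assume "\<not> e < 1"
    have ii: "integrable D (\<lambda>t. 1 - t)" using id_integrable[OF DD] by simp
    have "(\<integral>t. 1 - t \<partial>D) = 1 - e" unfolding e_def
      using id_integrable[OF DD] by (simp add: Dp.prob_space)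
    then have z: "(\<integral>t. 1 - t \<partial>D) \<le> 0" using \<open>\<not> e < 1\<close> by simp
    have nn: "AE t in D. 0 \<le> 1 - t" using assms(4) by eventually_elim auto
    have "(\<integral>t. 1 - t \<partial>D) \<ge> 0" by (rule integral_nonneg_AE[OF nn])
    then have "(\<integral>t. 1 - t \<partial>D) = 0" using z by simp
    then have "AE t in D. 1 - t = 0" using integral_nonneg_eq_0_iff_AE[OF ii nn] by simp
    then have "AE t in D. False" using assms(4) by eventually_elim auto
    then show False using Dp.AE_False by simp
  qed
  have mx: "nrm (x i) \<le> m" if "i \<le> N" for i
    unfolding m_def mmax_def using that by (intro Max_ge) auto
  have m0: "0 \<le> m" using mx[of 0] nrmp(3)[of "x 0"] by simp
  have mx': "nrm (x i - x (i - 1)) \<le> m'" if "1 \<le> i" "i \<le> N" for i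
    unfolding m'_def mmax'_def using that by (intro Max_ge) auto
  have m'0: "0 \<le> m'" unfolding m'_def mmax'_def by (intro Max_ge) auto
  define r where "r n = integral\<^sup>L (PiM {1..n} (\<lambda>_. D)) (\<lambda>l. rim x l n)" for n
  have pm1: "measure (PiM I (\<lambda>_. D)) (space (PiM I (\<lambda>_. D))) = 1" for I :: "nat set"
    by (rule prob_space.prob_space[OF PiD_prob[OF DD]])
  have r0: "r 0 = x 0" unfolding r_def by (simp only: rim.simps lebesgue_integral_const pm1) simp
  have rS: "r (Suc n) = (1 - e) * x (Suc n) + e * r n" for n
    unfolding r_def e_def by (rule rim_step[OF DD])
  have dint: "integral\<^sup>L (PiM {1..n} (\<lambda>_. D)) (\<lambda>l. rim x l n - x n) = r n - x n" for n
  proof -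
    interpret P: prob_space "PiM {1..n} (\<lambda>_. D)" by (rule PiD_prob[OF DD])
    have ii: "integrable (PiM {1..n} (\<lambda>_. D)) (\<lambda>l. rim x l n)" by (rule rim_integrable[OF DD]) auto
    have "integral\<^sup>L (PiM {1..n} (\<lambda>_. D)) (\<lambda>l. rim x l n - x n)
       = r n - (\<integral>l. x n \<partial>PiM {1..n} (\<lambda>_. D))"
      unfolding r_def by (rule Bochner_Integration.integral_diff) (use ii P.integrable_const[of "x n"] in auto)
    also have "(\<integral>l. x n \<partial>PiM {1..n} (\<lambda>_. D)) = x n"
      by (simp only: lebesgue_integral_const pm1) simp
    finally show ?thesis .
  qed
  have A: "n \<le> N \<Longrightarrow> nrm (r n) \<le> m" for n
  proof (induction n)
    case 0
    then show ?case using r0 mx by simp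
  next
    case (Suc n)
    have "nrm (r (Suc n)) \<le> nrm ((1 - e) * x (Suc n)) + nrm (e * r n)" using rS nrmp(2) by simp
    also have "\<dots> = (1 - e) * nrm (x (Suc n)) + e * nrm (r n)" using nrmp(1) e0 e1 by simp
    also have "\<dots> \<le> (1 - e) * m + e * m"
      using Suc mx[of "Suc n"] e0 e1 by (intro add_mono mult_left_mono) auto
    finally show ?case by (simp add: algebra_simps)
  qed
  have B: "n \<le> N \<Longrightarrow> nrm (r n - x n) \<le> 2 * e * m" for n
  proof (cases n)
    case 0
    then show ?thesis using r0 e0 m0 nrmp(1)[of 0 0] by simp
  next
    case (Suc k)
    assume nN: "n \<le> N"
    have "r n - x n = e * (r k - x n)" using rS[of k] Suc by (simp add: algebra_simps)
    then have "nrm (r n - x n) = e * nrm (r k - x n)" using nrmp(1) e0 by simp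
    also have "\<dots> \<le> e * (m + m)"
      using A[of k] mx[of n] nN Suc nrmp(4)[of "r k" "x n"] e0 by (intro mult_left_mono) auto
    finally show ?thesis by simp
  qed
  have C: "n \<le> N \<Longrightarrow> nrm (r n - x n) \<le> e / (1 - e) * m' \<and> nrm (r n - x n) \<le> n * e * m'" for n
  proof (induction n)
    case 0
    then show ?case using r0 e0 e1 m'0 nrmp(1)[of 0 0] by simp
  next
    case (Suc n)
    have "r (Suc n) - x (Suc n) = e * (r n - x n) + e * (x n - x (Suc n))"
      using rS[of n] by (simp add: algebra_simps)
    then have "nrm (r (Suc n) - x (Suc n)) \<le> e * nrm (r n - x n) + e * nrm (x n - x (Suc n))"
      using nrmp(1,2) e0 by (metis abs_of_nonneg)
    also have "nrm (x n - x (Suc n)) \<le> m'" using mx'[of "Suc n"] Suc.prems nrmp(6) by simp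
    finally have le: "nrm (r (Suc n) - x (Suc n)) \<le> e * nrm (r n - x n) + e * m'"
      using e0 by (smt (verit) mult_left_mono)
    have IH: "nrm (r n - x n) \<le> e / (1 - e) * m'" "nrm (r n - x n) \<le> n * e * m'" using Suc by auto
    have "e * nrm (r n - x n) + e * m' \<le> e * (e / (1 - e) * m') + e * m'"
      using mult_left_mono[OF IH(1) e0] by simp
    also have "\<dots> = e / (1 - e) * m'" using e1 by (simp add: field_simps)
    finally have c1: "nrm (r (Suc n) - x (Suc n)) \<le> e / (1 - e) * m'" using le by simp
    have "e * nrm (r n - x n) + e * m' \<le> 1 * (n * e * m') + e * m'"
      using IH(2) e0 e1 m'0 nrmp(3)[of "r n - x n"] by (intro add_mono mult_mono) auto
    also have "\<dots> = real (Suc n) * e * m'" by (simp add: algebra_simps)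
    finally have c2: "nrm (r (Suc n) - x (Suc n)) \<le> real (Suc n) * e * m'" using le by simp
    show ?case using c1 c2 by simp
  qed
  show ?thesis
  proof (intro ballI conjI allI impI)
    fix n assume n: "n \<in> {0..N}"
    fix l :: "nat \<Rightarrow> real"
    show "rim x l n = (\<Sum>k = 0..n. (\<Prod>i = k+1..n. l i) * gfun l k * x k)" by (rule rim_formula)
  next
    fix n assume n: "n \<in> {0..N}"
    then have nN: "n \<le> N" by simp
    have "3 * e * m \<ge> 2 * e * m" using e0 m0 by (simp add: mult_right_mono)
    moreover have "real n * e * m' \<le> real N * e * m'" using nN e0 m'0 by (simp add: mult_right_mono)
    ultimately show "nrm (integral\<^sup>L (PiM {1..n} (\<lambda>_. D)) (\<lambda>l. rim x l n - x n))
       \<le> min (3 * e * m) (min (e / (1 - e) * m') (real N * e * m'))"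
      unfolding dint using B[OF nN] C[OF nN] by simp
  next
    fix n assume n: "n \<in> {0..N}"
    fix t :: real assume t: "t \<in> {0..<1}"
    interpret P: prob_space "PiM {1..<n} (\<lambda>_. D)" by (rule PiD_prob[OF DD])
    have "integral\<^sup>L (PiM {1..<n} (\<lambda>_. D)) (\<lambda>l. nrm (rim x (l(n := t)) n - x n))
        \<le> (\<integral>l. 2 * t * m \<partial>PiM {1..<n} (\<lambda>_. D))"
    proof (rule integral_mono_AE')
      show "integrable (PiM {1..<n} (\<lambda>_. D)) (\<lambda>l. 2 * t * m)" by (rule P.integrable_const)
      show "AE l in PiM {1..<n} (\<lambda>_. D). 0 \<le> 2 * t * m" using t m0 by simp
      have "AE l in PiM {1..<n} (\<lambda>_. D). \<forall>i\<in>{1..<n}. l i \<in> {0..<1}"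
        using AE_box[OF DD, of "{1..<n}"] by simp
      then show "AE l in PiM {1..<n} (\<lambda>_. D). nrm (rim x (l(n := t)) n - x n) \<le> 2 * t * m"
      proof eventually_elim
        case (elim l)
        show ?case
        proof (cases n)
          case 0
          then show ?thesis using t m0 nrmp(1)[of 0 0] by simp
        next
          case (Suc k)
          have "\<forall>i\<in>{1..k}. l i \<in> {0..1}" using elim Suc by fastforce
          then have rb: "nrm (rim x l k) \<le> m"
            using rim_bound[OF assms(1), of k x m l] mx n Suc by auto
          have "rim x (l(n := t)) n - x n = t * (rim x l k - x n)"
            using Suc by (simp add: rim_upd algebra_simps)
          then have "nrm (rim x (l(n := t)) n - x n) = t * nrm (rim x l k - x n)"
            using nrmp(1) t by simp
          also have "\<dots> \<le> t * (m + m)"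
            using rb mx[of n] n nrmp(4)[of "rim x l k" "x n"] t by (intro mult_left_mono) auto
          finally show ?thesis by simp
        qed
      qed
    qed
    also have "(\<integral>l. 2 * t * m \<partial>PiM {1..<n} (\<lambda>_. D)) = 2 * t * m"
      by (simp only: lebesgue_integral_const pm1) simp
    finally show "integral\<^sup>L (PiM {1..<n} (\<lambda>_. D)) (\<lambda>l. nrm (rim x (l(n := t)) n - x n)) \<le> 2 * t * m" .
  qed
qed

end
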